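(* Let $(L,\exists)$ be a quantum monadic algebra and $a\in L$ with $\exists a=a$. Then the interval $[0,a]=\{x\in L: x\le a\}$, with the lattice operations of $L$, bounds $0,a$, orthocomplement $x^\#=a\wedge x^\perp$, and the restriction of $\exists$, is a quantum monadic algebra. Moreover, with $C(a)=\{x\in L: a\text{ commutes with }x\}$ (a subalgebra of $(L,\exists)$), the map $x\mapsto(x\wedge a,\,x\wedge a^\perp)$ is an isomorphism of quantum monadic algebras from $(C(a),\exists)$ onto the product $([0,a],\exists)\times([0,a^\perp],\exists)$, where $[0,a^\perp]$ carries orthocomplement $x\mapsto a^\perp\wedge x^\perp$.
   Context: An orthomodular lattice (OML) is a bounded lattice with a unary operation $\perp$ that is order-inverting, of period two, satisfies $x\wedge x^\perp=0$, $x\vee x^\perp=1$, and $x\le y\Rightarrow x\vee(x^\perp\wedge y)=y$. A quantum monadic algebra $(L,\exists)$ is an OML with a unary operation $\exists$ satisfying (Q1) $\exists 0=0$; (Q2) $p\le\exists p$; (Q3) $\exists(p\vee q)=\exists p\vee\exists q$; (Q4) $\exists\exists p=\exists p$; (Q5) $\exists(\exists p)^\perp=(\exists p)^\perp$. Elements $x,y$ of an OML commute if $x=(x\wedge y)\vee(x\wedge y^\perp)$. *)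

theory Defs
  imports Main
begin

record 'a qstr =
  car  :: "'a set"
  meet :: "'a \<Rightarrow> 'a \<Rightarrow> 'a"
  join :: "'a \<Rightarrow> 'a \<Rightarrow> 'a"
  orth :: "'a \<Rightarrow> 'a"
  zero :: 'a
  one  :: 'a
  ex   :: "'a \<Rightarrow> 'a"

definition leq :: "('a, 'b) qstr_scheme \<Rightarrow> 'a \<Rightarrow> 'a \<Rightarrow> bool" where
  "leq M x y \<longleftrightarrow> meet M x y = x"

definition is_OML :: "('a, 'b) qstr_scheme \<Rightarrow> bool" where
  "is_OML M \<longleftrightarrow>
     zero M \<in> car M \<and> one M \<in> car M \<and>
     (\<forall>x\<in>car M. \<forall>y\<in>car M. meet M x y \<in> car M \<and> join M x y \<in> car M) \<and>
     (\<forall>x\<in>car M. orth M x \<in> car M) \<and>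
     (\<forall>x\<in>car M. \<forall>y\<in>car M. meet M x y = meet M y x \<and> join M x y = join M y x) \<and>
     (\<forall>x\<in>car M. \<forall>y\<in>car M. \<forall>z\<in>car M.
        meet M (meet M x y) z = meet M x (meet M y z) \<and>
        join M (join M x y) z = join M x (join M y z)) \<and>
     (\<forall>x\<in>car M. \<forall>y\<in>car M. meet M x (join M x y) = x \<and> join M x (meet M x y) = x) \<and>
     (\<forall>x\<in>car M. leq M (zero M) x \<and> leq M x (one M)) \<and>
     (\<forall>x\<in>car M. \<forall>y\<in>car M. leq M x y \<longrightarrow> leq M (orth M y) (orth M x)) \<and>
     (\<forall>x\<in>car M. orth M (orth M x) = x) \<and>
     (\<forall>x\<in>car M. meet M x (orth M x) = zero M \<and> join M x (orth M x) = one M) \<and>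
     (\<forall>x\<in>car M. \<forall>y\<in>car M. leq M x y \<longrightarrow> join M x (meet M (orth M x) y) = y)"

definition is_QMA :: "('a, 'b) qstr_scheme \<Rightarrow> bool" where
  "is_QMA M \<longleftrightarrow> is_OML M \<and>
     (\<forall>p\<in>car M. ex M p \<in> car M) \<and>
     ex M (zero M) = zero M \<and>
     (\<forall>p\<in>car M. leq M p (ex M p)) \<and>
     (\<forall>p\<in>car M. \<forall>q\<in>car M. ex M (join M p q) = join M (ex M p) (ex M q)) \<and>
     (\<forall>p\<in>car M. ex M (ex M p) = ex M p) \<and>
     (\<forall>p\<in>car M. ex M (orth M (ex M p)) = orth M (ex M p))"

definition commutes :: "('a, 'b) qstr_scheme \<Rightarrow> 'a \<Rightarrow> 'a \<Rightarrow> bool" where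
  "commutes M x y \<longleftrightarrow> x = join M (meet M x y) (meet M x (orth M y))"

definition interval :: "'a qstr \<Rightarrow> 'a \<Rightarrow> 'a qstr" where
  "interval M b = \<lparr> car = {x\<in>car M. leq M x b}, meet = meet M, join = join M,
     orth = (\<lambda>x. meet M b (orth M x)), zero = zero M, one = b, ex = ex M \<rparr>"

definition centralizer :: "'a qstr \<Rightarrow> 'a \<Rightarrow> 'a set" where
  "centralizer M a = {x\<in>car M. commutes M a x}"

definition is_subalgebra :: "'a qstr \<Rightarrow> 'a set \<Rightarrow> bool" where
  "is_subalgebra M C \<longleftrightarrow> C \<subseteq> car M \<and> zero M \<in> C \<and> one M \<in> C \<and>
     (\<forall>x\<in>C. \<forall>y\<in>C. meet M x y \<in> C \<and> join M x y \<in> C) \<and>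
     (\<forall>x\<in>C. orth M x \<in> C) \<and> (\<forall>x\<in>C. ex M x \<in> C)"

definition substr :: "'a qstr \<Rightarrow> 'a set \<Rightarrow> 'a qstr" where
  "substr M C = M\<lparr>car := C\<rparr>"

definition qprod :: "'a qstr \<Rightarrow> 'b qstr \<Rightarrow> ('a \<times> 'b) qstr" where
  "qprod M N = \<lparr> car = car M \<times> car N,
     meet = (\<lambda>(x1,x2) (y1,y2). (meet M x1 y1, meet N x2 y2)),
     join = (\<lambda>(x1,x2) (y1,y2). (join M x1 y1, join N x2 y2)),
     orth = (\<lambda>(x1,x2). (orth M x1, orth N x2)),
     zero = (zero M, zero N), one = (one M, one N),
     ex = (\<lambda>(x1,x2). (ex M x1, ex N x2)) \<rparr>"

definition qma_iso :: "'a qstr \<Rightarrow> 'b qstr \<Rightarrow> ('a \<Rightarrow> 'b) \<Rightarrow> bool" where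
  "qma_iso M N f \<longleftrightarrow> bij_betw f (car M) (car N) \<and>
     (\<forall>x\<in>car M. \<forall>y\<in>car M. f (meet M x y) = meet N (f x) (f y) \<and>
                          f (join M x y) = join N (f x) (f y)) \<and>
     (\<forall>x\<in>car M. f (orth M x) = orth N (f x)) \<and>
     (\<forall>x\<in>car M. f (ex M x) = ex N (f x)) \<and>
     f (zero M) = zero N \<and> f (one M) = one N"

end

theory Submission
  imports Defs
begin

locale qma =
  fixes M :: "'a qstr"
  assumes QMA: "is_QMA M"
begin

abbreviation "L \<equiv> car M"
abbreviation "m \<equiv> meet M"
abbreviation "j \<equiv> join M"
abbreviation "c \<equiv> orth M"
abbreviation "E \<equiv> ex M"
abbreviation "le \<equiv> leq M"
abbreviation "z \<equiv> zero M"
abbreviation "u1 \<equiv> one M"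

lemma OML: "is_OML M" using QMA unfolding is_QMA_def by blast

lemma zc[simp]: "z \<in> L" and oc[simp]: "u1 \<in> L"
  using OML unfolding is_OML_def by auto
lemma mc[simp]: "x \<in> L \<Longrightarrow> y \<in> L \<Longrightarrow> m x y \<in> L"
  using OML unfolding is_OML_def by auto
lemma jc[simp]: "x \<in> L \<Longrightarrow> y \<in> L \<Longrightarrow> j x y \<in> L"
  using OML unfolding is_OML_def by auto
lemma cc[simp]: "x \<in> L \<Longrightarrow> c x \<in> L"
  using OML unfolding is_OML_def by auto
lemma mcomm: "x \<in> L \<Longrightarrow> y \<in> L \<Longrightarrow> m x y = m y x"
  using OML unfolding is_OML_def by auto
lemma jcomm: "x \<in> L \<Longrightarrow> y \<in> L \<Longrightarrow> j x y = j y x"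
  using OML unfolding is_OML_def by auto
lemma massoc: "x \<in> L \<Longrightarrow> y \<in> L \<Longrightarrow> w \<in> L \<Longrightarrow> m (m x y) w = m x (m y w)"
  using OML unfolding is_OML_def by auto
lemma jassoc: "x \<in> L \<Longrightarrow> y \<in> L \<Longrightarrow> w \<in> L \<Longrightarrow> j (j x y) w = j x (j y w)"
  using OML unfolding is_OML_def by auto
lemma abs1: "x \<in> L \<Longrightarrow> y \<in> L \<Longrightarrow> m x (j x y) = x"
  using OML unfolding is_OML_def by auto
lemma abs2: "x \<in> L \<Longrightarrow> y \<in> L \<Longrightarrow> j x (m x y) = x"
  using OML unfolding is_OML_def by auto
lemma zle: "x \<in> L \<Longrightarrow> le z x"
  using OML unfolding is_OML_def by auto
lemma le1: "x \<in> L \<Longrightarrow> le x u1"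
  using OML unfolding is_OML_def by auto
lemma anti: "x \<in> L \<Longrightarrow> y \<in> L \<Longrightarrow> le x y \<Longrightarrow> le (c y) (c x)"
  using OML unfolding is_OML_def by auto
lemma cc2[simp]: "x \<in> L \<Longrightarrow> c (c x) = x"
  using OML unfolding is_OML_def by auto
lemma mcompl: "x \<in> L \<Longrightarrow> m x (c x) = z"
  using OML unfolding is_OML_def by auto
lemma jcompl: "x \<in> L \<Longrightarrow> j x (c x) = u1"
  using OML unfolding is_OML_def by auto
lemma omod: "x \<in> L \<Longrightarrow> y \<in> L \<Longrightarrow> le x y \<Longrightarrow> j x (m (c x) y) = y"
  using OML unfolding is_OML_def by auto

lemma ec[simp]: "p \<in> L \<Longrightarrow> E p \<in> L" using QMA unfolding is_QMA_def by auto
lemma e0: "E z = z" using QMA unfolding is_QMA_def by auto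
lemma ele: "p \<in> L \<Longrightarrow> le p (E p)" using QMA unfolding is_QMA_def by auto
lemma ej: "p \<in> L \<Longrightarrow> q \<in> L \<Longrightarrow> E (j p q) = j (E p) (E q)" using QMA unfolding is_QMA_def by auto
lemma ee: "p \<in> L \<Longrightarrow> E (E p) = E p" using QMA unfolding is_QMA_def by auto
lemma eo: "p \<in> L \<Longrightarrow> E (c (E p)) = c (E p)" using QMA unfolding is_QMA_def by auto

lemma le_def: "le x y \<longleftrightarrow> m x y = x" by (simp add: leq_def)

lemma midem: "x \<in> L \<Longrightarrow> m x x = x"
  by (metis abs1 abs2 mc)
lemma jidem: "x \<in> L \<Longrightarrow> j x x = x"
  by (metis abs1 abs2 jc)
lemma le_join: "x \<in> L \<Longrightarrow> y \<in> L \<Longrightarrow> le x y \<longleftrightarrow> j x y = y"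
  by (metis abs1 abs2 jcomm le_def mcomm)
lemma le_refl: "x \<in> L \<Longrightarrow> le x x" by (simp add: le_def midem)
lemma le_trans: "x \<in> L \<Longrightarrow> y \<in> L \<Longrightarrow> w \<in> L \<Longrightarrow> le x y \<Longrightarrow> le y w \<Longrightarrow> le x w"
  by (metis le_def massoc)
lemma le_antisym: "x \<in> L \<Longrightarrow> y \<in> L \<Longrightarrow> le x y \<Longrightarrow> le y x \<Longrightarrow> x = y"
  by (metis le_def mcomm)
lemma mle1: "x \<in> L \<Longrightarrow> y \<in> L \<Longrightarrow> le (m x y) x"
  by (metis le_def massoc mcomm midem)
lemma mle2: "x \<in> L \<Longrightarrow> y \<in> L \<Longrightarrow> le (m x y) y"
  by (metis mcomm mle1)
lemma glb: "x \<in> L \<Longrightarrow> y \<in> L \<Longrightarrow> w \<in> L \<Longrightarrow> le w x \<Longrightarrow> le w y \<Longrightarrow> le w (m x y)"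
  by (metis le_def massoc)
lemma jge1: "x \<in> L \<Longrightarrow> y \<in> L \<Longrightarrow> le x (j x y)"
  by (simp add: abs1 le_def)
lemma jge2: "x \<in> L \<Longrightarrow> y \<in> L \<Longrightarrow> le y (j x y)"
  by (metis jcomm jge1)
lemma lub: "x \<in> L \<Longrightarrow> y \<in> L \<Longrightarrow> w \<in> L \<Longrightarrow> le x w \<Longrightarrow> le y w \<Longrightarrow> le (j x y) w"
  by (metis jassoc jc le_join)
lemma mmono: "x \<in> L \<Longrightarrow> y \<in> L \<Longrightarrow> w \<in> L \<Longrightarrow> le x y \<Longrightarrow> le (m x w) (m y w)"
  by (meson glb le_trans mc mle1 mle2)

lemma dm1: "x \<in> L \<Longrightarrow> y \<in> L \<Longrightarrow> c (j x y) = m (c x) (c y)"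
proof -
  assume x: "x \<in> L" and y: "y \<in> L"
  have cx: "c x \<in> L" and cy: "c y \<in> L" and cj: "c (j x y) \<in> L" and mm: "m (c x) (c y) \<in> L"
    using x y by simp_all
  have 1: "le (c (j x y)) (m (c x) (c y))"
    using glb[OF cx cy cj anti[OF x _ jge1[OF x y]] anti[OF y _ jge2[OF x y]]] x y by simp
  have a1: "le x (c (m (c x) (c y)))" using anti[OF mm cx mle1[OF cx cy]] x by simp
  have a2: "le y (c (m (c x) (c y)))" using anti[OF mm cy mle2[OF cx cy]] y by simp
  have "le (j x y) (c (m (c x) (c y)))" using lub[OF x y _ a1 a2] mm by simp
  then have "le (c (c (m (c x) (c y)))) (c (j x y))" using anti[OF jc[OF x y] cc[OF mm]] by simp
  then have "le (m (c x) (c y)) (c (j x y))" using cc2[OF mm] by simp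
  with 1 show ?thesis using le_antisym[OF cj mm] by simp
qed
lemma dm2: "x \<in> L \<Longrightarrow> y \<in> L \<Longrightarrow> c (m x y) = j (c x) (c y)"
proof -
  assume x: "x \<in> L" and y: "y \<in> L"
  have "c (j (c x) (c y)) = m x y" using dm1[of "c x" "c y"] x y by simp
  then have "c (c (j (c x) (c y))) = c (m x y)" by simp
  then show ?thesis using x y by simp
qed

lemma domod: "u \<in> L \<Longrightarrow> b \<in> L \<Longrightarrow> le u b \<Longrightarrow> m b (j (c b) u) = u"
proof -
  assume u: "u \<in> L" and b: "b \<in> L" and le: "le u b"
  have "j (c b) (m b (c u)) = c u" using omod[of "c b" "c u"] anti[OF u b le] u b by simp
  then have "c (j (c b) (m b (c u))) = u" using u by simp
  then show ?thesis using u b by (simp add: dm1 dm2)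
qed

lemma comm_def': "commutes M x y \<longleftrightarrow> x = j (m x y) (m x (c y))"
  by (simp add: commutes_def)

lemma commA: "x \<in> L \<Longrightarrow> y \<in> L \<Longrightarrow> commutes M x y \<Longrightarrow> m y (j (c y) x) = m x y"
proof -
  assume x: "x \<in> L" and y: "y \<in> L" and cm: "commutes M x y"
  have xe: "x = j (m x y) (m x (c y))" using cm by (simp add: commutes_def)
  have lv: "le (m x (c y)) (c y)" by (simp add: mle2 x y)
  have "j (c y) x = j (c y) (j (m x y) (m x (c y)))" using xe by simp
  also have "\<dots> = j (j (c y) (m x (c y))) (m x y)"
    by (metis cc jassoc jcomm mc x y)
  also have "j (c y) (m x (c y)) = c y" using lv
    by (metis cc jcomm le_join mc x y)
  finally have "j (c y) x = j (c y) (m x y)" by simp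
  then show ?thesis using domod[of "m x y" y] by (simp add: mle2 x y)
qed

lemma commB: "x \<in> L \<Longrightarrow> y \<in> L \<Longrightarrow> m y (j (c y) x) = m y x \<Longrightarrow> commutes M y x"
proof -
  assume x: "x \<in> L" and y: "y \<in> L" and h: "m y (j (c y) x) = m y x"
  define w where "w = m y (j (c y) x)"
  have wL: "w \<in> L" by (simp add: w_def x y)
  have lw: "le w y" by (simp add: mle1 w_def x y)
  have cw: "c w = j (c y) (m y (c x))" unfolding w_def using x y by (simp add: dm1 dm2)
  have "m (c w) y = m y (j (c y) (m y (c x)))" using cw mcomm[of "c w" y] wL y by (metis cc)
  also have "\<dots> = m y (c x)" by (simp add: domod mle1 x y)
  finally have "y = j w (m y (c x))" using omod[OF wL y lw] by simp
  then show ?thesis using h w_def by (simp add: commutes_def)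
qed

lemma comm_sym: "x \<in> L \<Longrightarrow> y \<in> L \<Longrightarrow> commutes M x y \<Longrightarrow> commutes M y x"
proof -
  assume x: "x \<in> L" and y: "y \<in> L" and h: "commutes M x y"
  have "m y (j (c y) x) = m y x" using commA[OF x y h] mcomm[of x y] x y by simp
  then show ?thesis using commB[OF x y] by simp
qed

lemma commK: "u \<in> L \<Longrightarrow> v \<in> L \<Longrightarrow> a \<in> L \<Longrightarrow> le u a \<Longrightarrow> le v (c a) \<Longrightarrow> m (j u v) a = u"
proof -
  assume u: "u \<in> L" and v: "v \<in> L" and a: "a \<in> L" and ua: "le u a" and va: "le v (c a)"
  have acv: "le a (c v)" using anti[OF v _ va] a by simp
  have ucv: "le u (c v)" using le_trans[OF u a _ ua acv] v by simp
  have "le (m (j u v) a) (m (j u v) (c v))"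
  proof -
    have "le (m (j u v) a) (c v)" using le_trans[OF _ a _ mle2[of "j u v" a] acv] u v a by simp
    then show ?thesis using glb[OF _ _ _ mle1[of "j u v" a]] u v a by simp
  qed
  also have "m (j u v) (c v) = u"
  proof -
    have "m (c v) (j v u) = u" using domod[OF u _ ucv] v by simp
    moreover have "m (j u v) (c v) = m (c v) (j v u)" using u v mcomm[of "j u v" "c v"] jcomm[of u v] by simp
    ultimately show ?thesis by simp
  qed
  finally have "le (m (j u v) a) u" .
  moreover have "le u (m (j u v) a)" by (simp add: a glb jge1 u ua v)
  ultimately show ?thesis by (simp add: a le_antisym u v)
qed

lemma commK2: "u \<in> L \<Longrightarrow> v \<in> L \<Longrightarrow> a \<in> L \<Longrightarrow> le u a \<Longrightarrow> le v (c a) \<Longrightarrow> m (j u v) (c a) = v"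
proof -
  assume u: "u \<in> L" and v: "v \<in> L" and a: "a \<in> L" and ua: "le u a" and va: "le v (c a)"
  have "m (j v u) (c a) = v" using commK[of v u "c a"] u v a ua va by simp
  then show ?thesis using jcomm[of u v] u v by simp
qed

lemma commK3: "u \<in> L \<Longrightarrow> v \<in> L \<Longrightarrow> a \<in> L \<Longrightarrow> le u a \<Longrightarrow> le v (c a) \<Longrightarrow> commutes M a (j u v)"
proof -
  assume u: "u \<in> L" and v: "v \<in> L" and a: "a \<in> L" and ua: "le u a" and va: "le v (c a)"
  have "commutes M (j u v) a" unfolding comm_def'
    using commK[OF u v a ua va] commK2[OF u v a ua va] by simp
  then show ?thesis using comm_sym[of "j u v" a] u v a by simp
qed

lemma comm_dec: "x \<in> L \<Longrightarrow> a \<in> L \<Longrightarrow> commutes M a x \<Longrightarrow> x = j (m x a) (m x (c a))"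
  using comm_sym[of a x] comm_def'[of x a] by blast

lemma emono: "x \<in> L \<Longrightarrow> y \<in> L \<Longrightarrow> le x y \<Longrightarrow> le (E x) (E y)"
  using le_join[of x y] le_join[of "E x" "E y"] ej[of x y] by simp

lemma closed_c: "b \<in> L \<Longrightarrow> E b = b \<Longrightarrow> E (c b) = c b"
proof -
  assume b: "b \<in> L" and eb: "E b = b"
  have "E (c (E b)) = c (E b)" using eo[OF b] .
  then show ?thesis unfolding eb .
qed
lemma closed_m: "b \<in> L \<Longrightarrow> d \<in> L \<Longrightarrow> E b = b \<Longrightarrow> E d = d \<Longrightarrow> E (m b d) = m b d"
proof -
  assume b: "b \<in> L" and d: "d \<in> L" and eb: "E b = b" and ed: "E d = d"
  have 1: "m b d = c (j (c b) (c d))" using dm1[of "c b" "c d"] b d by simp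
  have 2: "E (j (c b) (c d)) = j (c b) (c d)"
    using ej[of "c b" "c d"] closed_c[OF b eb] closed_c[OF d ed] b d by simp
  have "E (c (E (j (c b) (c d)))) = c (E (j (c b) (c d)))" using eo[of "j (c b) (c d)"] b d by simp
  then have "E (c (j (c b) (c d))) = c (j (c b) (c d))" unfolding 2 .
  then show ?thesis unfolding 1[symmetric] .
qed


lemma meq1: "x \<in> L \<Longrightarrow> y \<in> L \<Longrightarrow> le x y \<Longrightarrow> m x y = x" by (simp add: le_def)
lemma meq2: "x \<in> L \<Longrightarrow> y \<in> L \<Longrightarrow> le x y \<Longrightarrow> m y x = x" using mcomm[of x y] by (simp add: le_def)
lemma jeq1: "x \<in> L \<Longrightarrow> y \<in> L \<Longrightarrow> le x y \<Longrightarrow> j x y = y" using le_join by blast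
lemma jeq2: "x \<in> L \<Longrightarrow> y \<in> L \<Longrightarrow> le x y \<Longrightarrow> j y x = y" using le_join[of x y] jcomm[of x y] by simp

lemma j4: "p \<in> L \<Longrightarrow> q \<in> L \<Longrightarrow> r \<in> L \<Longrightarrow> s \<in> L \<Longrightarrow> j (j p q) (j r s) = j (j p r) (j q s)"
proof -
  assume p: "p \<in> L" and q: "q \<in> L" and r: "r \<in> L" and s: "s \<in> L"
  have "j (j p q) (j r s) = j p (j q (j r s))" using jassoc[of p q "j r s"] p q r s by simp
  also have "j q (j r s) = j (j q r) s" using jassoc[of q r s] q r s by simp
  also have "j q r = j r q" using jcomm q r by simp
  also have "j (j r q) s = j r (j q s)" using jassoc[of r q s] q r s by simp
  also have "j p (j r (j q s)) = j (j p r) (j q s)" using jassoc[of p r "j q s"] p q r s by simp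
  finally show ?thesis .
qed

lemma mm: "x \<in> L \<Longrightarrow> y \<in> L \<Longrightarrow> a \<in> L \<Longrightarrow> m (m x y) a = m (m x a) (m y a)"
proof -
  assume x: "x \<in> L" and y: "y \<in> L" and a: "a \<in> L"
  have 1: "m (m x a) (m y a) = m x (m a (m y a))" using massoc[of x a "m y a"] x y a by simp
  have 2: "m y a = m a y" using mcomm y a by simp
  have 3: "m a (m a y) = m (m a a) y" using massoc[of a a y] y a by simp
  have 4: "m a a = a" using midem a by simp
  have 5: "m (m x y) a = m x (m y a)" using massoc[of x y a] x y a by simp
  show ?thesis using 1 2 3 4 5 by simp
qed

lemma leq_interval: "leq (interval M b) = leq M"
  by (simp add: leq_def interval_def fun_eq_iff)

lemma interval_QMA:
  assumes b: "b \<in> L" and eb: "E b = b"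
  shows "is_QMA (interval M b)"
proof -
  define S where "S = {x \<in> L. le x b}"
  have I: "car (interval M b) = S" "meet (interval M b) = m" "join (interval M b) = j"
     "orth (interval M b) = (\<lambda>x. m b (c x))" "zero (interval M b) = z" "one (interval M b) = b"
     "ex (interval M b) = E" by (simp_all add: interval_def S_def)
  have f1: "z \<in> S" using b zle S_def by simp
  have f2: "b \<in> S" using b le_refl S_def by simp
  have f3: "\<And>x y. x \<in> S \<Longrightarrow> y \<in> S \<Longrightarrow> m x y \<in> S \<and> j x y \<in> S \<and> m x y = m y x \<and> j x y = j y x
     \<and> m x (j x y) = x \<and> j x (m x y) = x"
  proof -
    fix x y assume "x \<in> S" "y \<in> S"
    then have xL: "x \<in> L" and yL: "y \<in> L" and xb: "le x b" and yb: "le y b" by (auto simp: S_def)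
    have "m x y \<in> S" using le_trans[OF _ xL b mle1[OF xL yL] xb] xL yL by (simp add: S_def)
    moreover have "j x y \<in> S" using lub[OF xL yL b xb yb] xL yL by (simp add: S_def)
    ultimately show "?thesis x y" using mcomm[OF xL yL] jcomm[OF xL yL] abs1[OF xL yL] abs2[OF xL yL] by blast
  qed
  have f4: "\<And>x y. x \<in> S \<Longrightarrow> y \<in> S \<Longrightarrow> le x y \<Longrightarrow> j x (m (m b (c x)) y) = y \<and> le (m b (c y)) (m b (c x))"
  proof -
    fix x y assume "x \<in> S" "y \<in> S" and xy: "le x y"
    then have xL: "x \<in> L" and yL: "y \<in> L" and xb: "le x b" and yb: "le y b" by (auto simp: S_def)
    have "m (m b (c x)) y = m (m (c x) b) y" using mcomm[of b "c x"] b xL by simp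
    also have "\<dots> = m (c x) (m b y)" using massoc[of "c x" b y] b xL yL by simp
    also have "m b y = y" using meq2[OF yL b yb] .
    finally have 1: "j x (m (m b (c x)) y) = y" using omod[OF xL yL xy] by simp
    have 2: "le (m b (c y)) (m b (c x))"
      using glb[OF b _ _ mle1[of b "c y"] le_trans[OF _ _ _ mle2[of b "c y"] anti[OF xL yL xy]]] b xL yL
      by simp
    show "?thesis x y" using 1 2 by simp
  qed
  have f5: "\<And>x. x \<in> S \<Longrightarrow> m b (c x) \<in> S \<and> le z x \<and> le x b \<and> m b (c (m b (c x))) = x
     \<and> m x (m b (c x)) = z \<and> j x (m b (c x)) = b"
  proof -
    fix x assume "x \<in> S"
    then have xL: "x \<in> L" and xb: "le x b" by (auto simp: S_def)
    have 1: "m b (c x) \<in> S" using mle1[of b "c x"] xL b by (simp add: S_def)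
    have "c (m b (c x)) = j (c b) x" using dm2[of b "c x"] b xL by simp
    then have 2: "m b (c (m b (c x))) = x" using domod[OF xL b xb] by simp
    have "le (m x (m b (c x))) (m x (c x))"
      using glb[OF xL _ _ mle1[of x "m b (c x)"] le_trans[OF _ _ _ mle2[of x "m b (c x)"] mle2[of b "c x"]]] b xL
      by simp
    then have "le (m x (m b (c x))) z" using mcompl xL by simp
    moreover have L1: "m x (m b (c x)) \<in> L" using b xL by simp
    ultimately have 3: "m x (m b (c x)) = z" using le_antisym[OF L1 zc _ zle[OF L1]] by simp
    have 4: "j x (m b (c x)) = b" using omod[OF xL b xb] mcomm[of b "c x"] b xL by simp
    show "?thesis x" using 1 2 3 4 zle[OF xL] xb by simp
  qed
  have f6: "\<And>x y w. x \<in> S \<Longrightarrow> y \<in> S \<Longrightarrow> w \<in> S \<Longrightarrow> m (m x y) w = m x (m y w) \<and> j (j x y) w = j x (j y w)"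
    using massoc jassoc unfolding S_def by blast
  have oml: "is_OML (interval M b)"
    unfolding is_OML_def leq_interval I
    apply (intro conjI ballI impI)
    using f1 f2 f3 f4 f5 f6 by meson+
  have g1: "\<And>p. p \<in> S \<Longrightarrow> E p \<in> S \<and> le p (E p) \<and> E (E p) = E p \<and> E (m b (c (E p))) = m b (c (E p))"
  proof -
    fix p assume "p \<in> S"
    then have p: "p \<in> L" and pb: "le p b" by (auto simp: S_def)
    have 1: "E p \<in> S" using emono[OF p b pb] eb p by (simp add: S_def)
    have 2: "E (m b (c (E p))) = m b (c (E p))"
      using closed_m[OF b _ eb closed_c[of "E p"]] ee p by simp
    show "?thesis p" using 1 2 ele p ee by simp
  qed
  have g2: "\<And>p q. p \<in> S \<Longrightarrow> q \<in> S \<Longrightarrow> E (j p q) = j (E p) (E q)" using ej by (simp add: S_def)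
  show ?thesis unfolding is_QMA_def I leq_interval
    apply (intro conjI ballI)
    using oml g1 g2 e0 by meson+
qed

lemma inC: "x \<in> L \<Longrightarrow> a \<in> L \<Longrightarrow> commutes M a x \<longleftrightarrow> x = j (m x a) (m x (c a))"
proof
  assume "x \<in> L" "a \<in> L" "commutes M a x"
  then show "x = j (m x a) (m x (c a))" by (rule comm_dec)
next
  assume x: "x \<in> L" and a: "a \<in> L" and h: "x = j (m x a) (m x (c a))"
  have "commutes M a (j (m x a) (m x (c a)))"
    using commK3[of "m x a" "m x (c a)" a] x a by (simp add: mle2)
  then show "commutes M a x" using h by simp
qed

context
  fixes a assumes a: "a \<in> L" and ea: "E a = a"
begin

lemma eca: "E (c a) = c a" using closed_c[OF a ea] .

lemma C_j: "x \<in> L \<Longrightarrow> y \<in> L \<Longrightarrow> commutes M a x \<Longrightarrow> commutes M a y \<Longrightarrow>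
   commutes M a (j x y) \<and> m (j x y) a = j (m x a) (m y a) \<and> m (j x y) (c a) = j (m x (c a)) (m y (c a))"
proof -
  assume x: "x \<in> L" and y: "y \<in> L" and cx: "commutes M a x" and cy: "commutes M a y"
  define x1 x2 y1 y2 where "x1 = m x a" "x2 = m x (c a)" "y1 = m y a" "y2 = m y (c a)"
  have L: "x1 \<in> L" "x2 \<in> L" "y1 \<in> L" "y2 \<in> L" using x y a by (simp_all add: x1_x2_y1_y2_def)
  have le: "le x1 a" "le x2 (c a)" "le y1 a" "le y2 (c a)" using x y a by (simp_all add: x1_x2_y1_y2_def mle2)
  have "j x y = j (j x1 x2) (j y1 y2)"
    using comm_dec[OF x a cx] comm_dec[OF y a cy] unfolding x1_x2_y1_y2_def by simp
  also have "\<dots> = j (j x1 y1) (j x2 y2)" using j4 L by simp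
  finally have e: "j x y = j (j x1 y1) (j x2 y2)" .
  have u: "le (j x1 y1) a" using lub L le a by simp
  have v: "le (j x2 y2) (c a)" using lub L le a by simp
  show ?thesis unfolding e
    using commK3[OF _ _ a u v] commK[OF _ _ a u v] commK2[OF _ _ a u v] L
    unfolding x1_x2_y1_y2_def by simp
qed

lemma C_c: "x \<in> L \<Longrightarrow> commutes M a x \<Longrightarrow> commutes M a (c x)"
  using jcomm[of "m a x" "m a (c x)"] a by (simp add: commutes_def)

lemma C_m: "x \<in> L \<Longrightarrow> y \<in> L \<Longrightarrow> commutes M a x \<Longrightarrow> commutes M a y \<Longrightarrow> commutes M a (m x y)"
proof -
  assume x: "x \<in> L" and y: "y \<in> L" and cx: "commutes M a x" and cy: "commutes M a y"
  have "commutes M a (c (j (c x) (c y)))" using C_c C_j[of "c x" "c y"] C_c[OF x cx] C_c[OF y cy] x y by simp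
  then show ?thesis using dm1[of "c x" "c y"] x y by simp
qed

lemma C_E: "x \<in> L \<Longrightarrow> commutes M a x \<Longrightarrow>
   commutes M a (E x) \<and> m (E x) a = E (m x a) \<and> m (E x) (c a) = E (m x (c a))"
proof -
  assume x: "x \<in> L" and cx: "commutes M a x"
  define x1 x2 where "x1 = E (m x a)" "x2 = E (m x (c a))"
  have L: "x1 \<in> L" "x2 \<in> L" using x a by (simp_all add: x1_x2_def)
  have u: "le x1 a" using emono[of "m x a" a] mle2[of x a] x a ea by (simp add: x1_x2_def)
  have v: "le x2 (c a)" using emono[of "m x (c a)" "c a"] mle2[of x "c a"] x a eca by (simp add: x1_x2_def)
  have "E x = E (j (m x a) (m x (c a)))" using comm_dec[OF x a cx] by (rule arg_cong)
  also have "\<dots> = j x1 x2" using ej[of "m x a" "m x (c a)"] x a unfolding x1_x2_def by simp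
  finally have e: "E x = j x1 x2" .
  show ?thesis unfolding e
    using commK3[OF L a u v] commK[OF L a u v] commK2[OF L a u v] unfolding x1_x2_def by simp
qed

lemma C_orth: "x \<in> L \<Longrightarrow> commutes M a x \<Longrightarrow>
   m (c x) a = m a (c (m x a)) \<and> m (c x) (c a) = m (c a) (c (m x (c a)))"
proof -
  assume x: "x \<in> L" and cx: "commutes M a x"
  define x1 x2 where "x1 = m x a" "x2 = m x (c a)"
  have L: "x1 \<in> L" "x2 \<in> L" using x a by (simp_all add: x1_x2_def)
  have u: "le x1 a" and v: "le x2 (c a)" using x a by (simp_all add: x1_x2_def mle2)
  have "c x = c (j (m x a) (m x (c a)))" using comm_dec[OF x a cx] by (rule arg_cong)
  then have cxe: "c x = m (c x1) (c x2)" using dm1[OF L] unfolding x1_x2_def by simp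
  have a2: "le a (c x2)" using anti[OF L(2) _ v] a by simp
  have a1: "le (c a) (c x1)" using anti[OF L(1) a u] .
  have cL: "c x1 \<in> L" "c x2 \<in> L" "c a \<in> L" using L a by simp_all
  have e1: "m (c x) a = m (c x1) (m (c x2) a)" using cxe massoc[OF cL(1) cL(2) a] by simp
  have e2: "m (c x2) a = a" using meq2[OF a cL(2) a2] .
  have e3: "m (c x1) a = m a (c x1)" using mcomm[OF cL(1) a] .
  have 1: "m (c x) a = m a (c x1)" using e1 e2 e3 by simp
  have d1: "m (c x) (c a) = m (m (c x2) (c x1)) (c a)" using cxe mcomm[OF cL(1) cL(2)] by simp
  have d2: "m (m (c x2) (c x1)) (c a) = m (c x2) (m (c x1) (c a))" using massoc[OF cL(2) cL(1) cL(3)] .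
  have d3: "m (c x1) (c a) = c a" using meq2[OF cL(3) cL(1) a1] .
  have d4: "m (c x2) (c a) = m (c a) (c x2)" using mcomm[OF cL(2) cL(3)] .
  have 2: "m (c x) (c a) = m (c a) (c x2)" using d1 d2 d3 d4 by simp
  show ?thesis using 1 2 unfolding x1_x2_def by simp
qed

end

end

theorem mainTheorem5:
  fixes M :: "'a qstr" and a :: 'a
  assumes "is_QMA M" and "a \<in> car M" and "ex M a = a"
  shows "is_QMA (interval M a)
     \<and> is_subalgebra M (centralizer M a)
     \<and> is_QMA (substr M (centralizer M a))
     \<and> qma_iso (substr M (centralizer M a))
               (qprod (interval M a) (interval M (orth M a)))
               (\<lambda>x. (meet M x a, meet M x (orth M a)))"
proof -
  interpret qma M by unfold_locales (rule assms(1))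
  have a: "a \<in> L" and ea: "E a = a" using assms by auto
  define C where "C = centralizer M a"
  have Cd: "\<And>x. x \<in> C \<longleftrightarrow> x \<in> L \<and> commutes M a x" by (simp add: C_def centralizer_def)
  have CL: "\<And>x. x \<in> C \<Longrightarrow> x \<in> L" using Cd by blast
  have ca: "c a \<in> L" using a by simp
  have Cz: "z \<in> C"
  proof -
    have 1: "m z a = z" using meq1[OF zc a zle[OF a]] .
    have 2: "m z (c a) = z" using meq1[OF zc ca zle[OF ca]] .
    have 3: "j z z = z" using jidem[OF zc] .
    have "commutes M a z" using inC[OF zc a] 1 2 3 by simp
    then show ?thesis using Cd[of z] zc by simp
  qed
  have Co: "u1 \<in> C"
  proof -
    have 1: "m u1 a = a" using meq2[OF a oc le1[OF a]] .
    have 2: "m u1 (c a) = c a" using meq2[OF ca oc le1[OF ca]] .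
    have 3: "j a (c a) = u1" using jcompl[OF a] .
    have "commutes M a u1" using inC[OF oc a] 1 2 3 by simp
    then show ?thesis using Cd[of u1] oc by simp
  qed
  have Cj: "\<And>x y. x \<in> C \<Longrightarrow> y \<in> C \<Longrightarrow> j x y \<in> C"
  proof -
    fix x y assume "x \<in> C" "y \<in> C"
    then have x: "x \<in> L" "commutes M a x" and y: "y \<in> L" "commutes M a y" using Cd[of x] Cd[of y] by simp_all
    have "commutes M a (j x y)" using C_j[OF a ea x(1) y(1) x(2) y(2)] by (rule conjunct1)
    then show "j x y \<in> C" using Cd[of "j x y"] jc[OF x(1) y(1)] by simp
  qed
  have Cm: "\<And>x y. x \<in> C \<Longrightarrow> y \<in> C \<Longrightarrow> m x y \<in> C"
  proof -
    fix x y assume "x \<in> C" "y \<in> C"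
    then have x: "x \<in> L" "commutes M a x" and y: "y \<in> L" "commutes M a y" using Cd[of x] Cd[of y] by simp_all
    have "commutes M a (m x y)" using C_m[OF a ea x(1) y(1) x(2) y(2)] .
    then show "m x y \<in> C" using Cd[of "m x y"] mc[OF x(1) y(1)] by simp
  qed
  have Cc: "\<And>x. x \<in> C \<Longrightarrow> c x \<in> C"
  proof -
    fix x assume "x \<in> C"
    then have x: "x \<in> L" "commutes M a x" using Cd[of x] by simp_all
    have "commutes M a (c x)" using C_c[OF a ea x(1) x(2)] .
    then show "c x \<in> C" using Cd[of "c x"] cc[OF x(1)] by simp
  qed
  have CE: "\<And>x. x \<in> C \<Longrightarrow> E x \<in> C"
  proof -
    fix x assume "x \<in> C"
    then have x: "x \<in> L" "commutes M a x" using Cd[of x] by simp_all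
    have "commutes M a (E x)" using C_E[OF a ea x(1) x(2)] by (rule conjunct1)
    then show "E x \<in> C" using Cd[of "E x"] ec[OF x(1)] by simp
  qed
  have sub: "is_subalgebra M C" unfolding is_subalgebra_def
    apply (intro conjI ballI subsetI)
    using CL Cz Co Cj Cm Cc CE by meson+
  have S: "car (substr M C) = C" "meet (substr M C) = m" "join (substr M C) = j"
     "orth (substr M C) = c" "zero (substr M C) = z" "one (substr M C) = u1"
     "ex (substr M C) = E" by (simp_all add: substr_def)
  have leqS: "leq (substr M C) = leq M" by (simp add: leq_def substr_def fun_eq_iff)
  have qS: "is_QMA (substr M C)"
    unfolding is_QMA_def is_OML_def leqS S
    apply (intro conjI ballI impI)
    using Cz Co Cj Cm Cc CE CL mcomm jcomm massoc jassoc abs1 abs2 zle le1 anti cc2 mcompl jcompl omod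
      e0 ele ej ee eo
    by meson+
  have iso: "qma_iso (substr M C) (qprod (interval M a) (interval M (c a))) (\<lambda>x. (m x a, m x (c a)))"
  proof -
    have P: "car (qprod (interval M a) (interval M (c a))) = {x \<in> L. le x a} \<times> {x \<in> L. le x (c a)}"
      by (simp add: qprod_def interval_def)
    have bij: "bij_betw (\<lambda>x. (m x a, m x (c a))) C ({x \<in> L. le x a} \<times> {x \<in> L. le x (c a)})"
    proof (rule bij_betw_imageI)
      show "inj_on (\<lambda>x. (m x a, m x (c a))) C"
      proof (rule inj_onI)
        fix x y assume "x \<in> C" "y \<in> C" "(m x a, m x (c a)) = (m y a, m y (c a))"
        then show "x = y" using comm_dec[OF _ a, of x] comm_dec[OF _ a, of y] Cd by force
      qed
      show "(\<lambda>x. (m x a, m x (c a))) ` C = {x \<in> L. le x a} \<times> {x \<in> L. le x (c a)}"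
      proof
        show "(\<lambda>x. (m x a, m x (c a))) ` C \<subseteq> {x \<in> L. le x a} \<times> {x \<in> L. le x (c a)}"
          using CL a mle2 by auto
      next
        show "{x \<in> L. le x a} \<times> {x \<in> L. le x (c a)} \<subseteq> (\<lambda>x. (m x a, m x (c a))) ` C"
        proof
          fix p assume "p \<in> {x \<in> L. le x a} \<times> {x \<in> L. le x (c a)}"
          then obtain u v where p: "p = (u, v)" and u: "u \<in> L" "le u a" and v: "v \<in> L" "le v (c a)" by auto
          have "j u v \<in> C" using Cd commK3[OF u(1) v(1) a u(2) v(2)] u v by simp
          moreover have "p = (m (j u v) a, m (j u v) (c a))"
            using p commK[OF u(1) v(1) a u(2) v(2)] commK2[OF u(1) v(1) a u(2) v(2)] by simp
          ultimately show "p \<in> (\<lambda>x. (m x a, m x (c a))) ` C" by blast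
        qed
      qed
    qed
    show ?thesis unfolding qma_iso_def S P
    proof (intro conjI ballI)
      show "bij_betw (\<lambda>x. (m x a, m x (c a))) C ({x \<in> L. le x a} \<times> {x \<in> L. le x (c a)})" by (rule bij)
    next
      fix x y assume x: "x \<in> C" and y: "y \<in> C"
      show "(m (m x y) a, m (m x y) (c a)) = meet (qprod (interval M a) (interval M (c a))) (m x a, m x (c a)) (m y a, m y (c a))"
        using mm[of x y a] mm[of x y "c a"] CL x y a by (simp add: qprod_def interval_def)
      show "(m (j x y) a, m (j x y) (c a)) = join (qprod (interval M a) (interval M (c a))) (m x a, m x (c a)) (m y a, m y (c a))"
        using C_j[OF a ea, of x y] Cd x y by (simp add: qprod_def interval_def)
    next
      fix x assume x: "x \<in> C"
      show "(m (c x) a, m (c x) (c a)) = orth (qprod (interval M a) (interval M (c a))) (m x a, m x (c a))"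
        using C_orth[OF a ea, of x] Cd x by (simp add: qprod_def interval_def)
      show "(m (E x) a, m (E x) (c a)) = ex (qprod (interval M a) (interval M (c a))) (m x a, m x (c a))"
        using C_E[OF a ea, of x] Cd x by (simp add: qprod_def interval_def)
    next
      show "(m z a, m z (c a)) = zero (qprod (interval M a) (interval M (c a)))"
        using meq1[OF _ _ zle] a by (simp add: qprod_def interval_def)
      show "(m u1 a, m u1 (c a)) = one (qprod (interval M a) (interval M (c a)))"
        using meq2[OF _ _ le1] a by (simp add: qprod_def interval_def)
    qed
  qed
  show ?thesis using interval_QMA[OF a ea] sub qS iso unfolding C_def by simp
qed

end
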